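(* Consider the delayed online learning protocol of the context. Assume the maximum delay is bounded by $\tau$ (i.e. $\{1,\dots,t-\tau-1\}\subset\mathcal S_t$ for all $t$), that $\|g_t\|_*\le G$ for all $t$, and that whenever $s\in\mathcal S_t$ one has $|\mathcal S_s|<|\mathcal S_t|$. Let DDA be run with \[\eta_t=\frac{r}{G\sqrt{(1+2\tau)(|\mathcal S_t|+\tau+1)}}.\] Then for every $p\in\mathcal X$ with $h(p)\le r^2$, \[R_T(p)\le 2rG\sqrt{(T+\tau)(1+2\tau)}.\]
   Context: Let $\mathcal V$ be a finite-dimensional real vector space with norm $\|\cdot\|$ and dual norm $\|\cdot\|_*$, and $\mathcal X\subset\mathcal V$ closed convex. A regularizer $h:\mathcal V\to\mathbb R\cup\{+\infty\}$ is lower semicontinuous, $1$-strongly convex w.r.t. $\|\cdot\|$ on $\mathcal X$, with $\mathcal X\subset\operatorname{dom}h$, whose subdifferential admits a continuous selection, and $h\ge0$. Protocol: at each round $t=1,\dots,T$ one agent $i(t)$ (among possibly many) is active, plays $x_t\in\mathcal X$, incurs $f_t(x_t)$ ($f_t$ convex, $\mathcal X\subset\operatorname{dom}\partial f_t$); a subgradient $g_t\in\partial f_t(x_t)$ is revealed later. $\mathcal S^i_t\subset\{1,\dots,t-1\}$: timestamps of subgradients available to (used by) agent $i$ at time $t$, nondecreasing in $t$; $\mathcal S_t=\mathcal S^{i(t)}_t$. DDA: $x_t=\arg\min_{x\in\mathcal X}\{\sum_{s\in\mathcal S_t}\langle g_s,x\rangle+h(x)/\eta_t\}$. Regret: $R_T(p)=\sum_tf_t(x_t)-\sum_tf_t(p)$.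 *)

theory Defs
  imports "HOL-Analysis.Analysis"
begin

text \<open>A norm on a finite-dimensional real vector space (modelled as a euclidean_space type;
  the dual space is identified with the space itself via the inner product).\<close>
definition is_norm :: "('a::euclidean_space \<Rightarrow> real) \<Rightarrow> bool" where
  "is_norm nrm \<longleftrightarrow> (\<forall>x. nrm x = 0 \<longleftrightarrow> x = 0)
     \<and> (\<forall>x y. nrm (x + y) \<le> nrm x + nrm y)
     \<and> (\<forall>c x. nrm (c *\<^sub>R x) = \<bar>c\<bar> * nrm x)"

definition dual_norm :: "('a::euclidean_space \<Rightarrow> real) \<Rightarrow> 'a \<Rightarrow> real" where
  "dual_norm nrm g = Sup {g \<bullet> x | x. nrm x \<le> 1}"

definition subdiff :: "('a::euclidean_space \<Rightarrow> ereal) \<Rightarrow> 'a \<Rightarrow> 'a set" where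
  "subdiff f x = {g. \<bar>f x\<bar> \<noteq> \<infinity> \<and> (\<forall>y. f y \<ge> f x + ereal (g \<bullet> (y - x)))}"

definition dom_subdiff :: "('a::euclidean_space \<Rightarrow> ereal) \<Rightarrow> 'a set" where
  "dom_subdiff f = {x. subdiff f x \<noteq> {}}"

definition lower_semicont :: "('a::euclidean_space \<Rightarrow> ereal) \<Rightarrow> bool" where
  "lower_semicont f \<longleftrightarrow> (\<forall>x. f x \<le> Liminf (at x) f)"

definition ereal_convex :: "('a::euclidean_space \<Rightarrow> ereal) \<Rightarrow> bool" where
  "ereal_convex f \<longleftrightarrow> (\<forall>x y u. 0 \<le> u \<and> u \<le> 1 \<longrightarrow>
      f (u *\<^sub>R x + (1 - u) *\<^sub>R y) \<le> ereal u * f x + ereal (1 - u) * f y)"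

definition strongly_convex_on :: "'a set \<Rightarrow> ('a::euclidean_space \<Rightarrow> real) \<Rightarrow> ('a \<Rightarrow> ereal) \<Rightarrow> bool" where
  "strongly_convex_on X nrm h \<longleftrightarrow> (\<forall>x\<in>X. \<forall>y\<in>X. \<forall>u. 0 \<le> u \<and> u \<le> 1 \<longrightarrow>
      h (u *\<^sub>R x + (1 - u) *\<^sub>R y) \<le> ereal u * h x + ereal (1 - u) * h y
        - ereal (u * (1 - u) / 2 * (nrm (x - y))\<^sup>2))"

end

theory Submission
  imports Defs
begin


lemma nrm_basic:
  assumes "is_norm nrm"
  shows "nrm 0 = 0" "nrm (-x) = nrm x" "nrm x \<ge> 0" "nrm (x - y) = nrm (y - x)"
proof -
  show z: "nrm 0 = 0" using assms unfolding is_norm_def by auto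
  have m: "nrm (-v) = nrm v" for v
    using assms unfolding is_norm_def by (metis abs_minus_cancel abs_one mult_1 scaleR_minus1_left)
  show "nrm (-x) = nrm x" by (rule m)
  have "nrm (x + -x) \<le> nrm x + nrm (-x)" using assms unfolding is_norm_def by blast
  then show "nrm x \<ge> 0" using z m by simp
  show "nrm (x - y) = nrm (y - x)" using m[of "x - y"] by simp
qed

lemma nrm_sum:
  assumes "is_norm nrm" "finite A"
  shows "nrm (sum f A) \<le> (\<Sum>a\<in>A. nrm (f a))"
  using assms(2)
proof (induction A rule: finite_induct)
  case empty then show ?case using nrm_basic[OF assms(1)] by simp
next
  case (insert a A)
  have "nrm (f a + sum f A) \<le> nrm (f a) + nrm (sum f A)"
    using assms(1) unfolding is_norm_def by blast
  then show ?case using insert by simp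
qed

lemma nrm_upper:
  assumes "is_norm nrm"
  shows "\<exists>C\<ge>0. \<forall>x. nrm x \<le> C * norm x"
proof -
  let ?C = "\<Sum>b\<in>(Basis::'a set). nrm b"
  have C0: "?C \<ge> 0" using nrm_basic(3)[OF assms] by (simp add: sum_nonneg)
  have "nrm x \<le> ?C * norm x" for x
  proof -
    have "nrm x = nrm (\<Sum>b\<in>Basis. (x \<bullet> b) *\<^sub>R b)" by (simp add: euclidean_representation)
    also have "\<dots> \<le> (\<Sum>b\<in>Basis. nrm ((x \<bullet> b) *\<^sub>R b))" by (rule nrm_sum[OF assms]) simp
    also have "\<dots> = (\<Sum>b\<in>Basis. \<bar>x \<bullet> b\<bar> * nrm b)"
      using assms unfolding is_norm_def by simp
    also have "\<dots> \<le> (\<Sum>b\<in>Basis. norm x * nrm b)"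
      by (rule sum_mono) (simp add: Basis_le_norm mult_right_mono nrm_basic(3)[OF assms])
    also have "\<dots> = ?C * norm x" by (simp add: sum_distrib_left mult.commute)
    finally show ?thesis .
  qed
  then show ?thesis using C0 by blast
qed

lemma nrm_lower:
  fixes nrm :: "'a::euclidean_space \<Rightarrow> real"
  assumes "is_norm nrm"
  shows "\<exists>k>0. \<forall>x. k * norm x \<le> nrm x"
proof -
  obtain C where C: "C \<ge> 0" "\<forall>x. nrm x \<le> C * norm x" using nrm_upper[OF assms] by blast
  have lip: "dist (nrm x) (nrm y) \<le> C * dist x y" for x y
  proof -
    have "nrm x \<le> nrm y + nrm (x - y)" using assms unfolding is_norm_def by (metis diff_add_cancel add.commute)
    moreover have "nrm y \<le> nrm x + nrm (y - x)" using assms unfolding is_norm_def by (metis diff_add_cancel add.commute)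
    ultimately show ?thesis using C nrm_basic(4)[OF assms, of x y]
      by (smt (verit) dist_norm dist_real_def norm_minus_commute)
  qed
  have cont: "continuous_on (sphere (0::'a) 1) nrm"
    by (rule lipschitz_on_continuous_on[of C]) (auto simp: lipschitz_on_def lip C)
  obtain b :: 'a where b: "b \<in> Basis" using nonempty_Basis by blast
  have ne: "sphere (0::'a) 1 \<noteq> {}" using b norm_Basis by (auto simp: sphere_def)
  obtain x0 where x0: "x0 \<in> sphere 0 1" "\<forall>y\<in>sphere 0 1. nrm x0 \<le> nrm y"
    using continuous_attains_inf[OF compact_sphere ne cont] by blast
  have "x0 \<noteq> 0" using x0 by auto
  then have k: "nrm x0 > 0" using assms nrm_basic(3)[OF assms, of x0] unfolding is_norm_def
    by (metis order_le_less)
  have "nrm x0 * norm x \<le> nrm x" for x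
  proof (cases "x = 0")
    case True then show ?thesis using nrm_basic[OF assms] by simp
  next
    case False
    let ?v = "(1 / norm x) *\<^sub>R x"
    have "?v \<in> sphere 0 1" using False by simp
    then have "nrm x0 \<le> nrm ?v" using x0 by blast
    also have "nrm ?v = nrm x / norm x" using assms unfolding is_norm_def by simp
    finally show ?thesis using False by (simp add: field_simps)
  qed
  then show ?thesis using k by blast
qed

lemma dual_bound:
  fixes nrm :: "'a::euclidean_space \<Rightarrow> real"
  assumes "is_norm nrm"
  shows "g \<bullet> y \<le> dual_norm nrm g * nrm y"
proof (cases "y = 0")
  case True then show ?thesis using nrm_basic[OF assms] by simp
next
  case False
  obtain k where k: "k > 0" "\<forall>x. k * norm x \<le> nrm x" using nrm_lower[OF assms] by blast
  have bdd: "bdd_above {g \<bullet> x | x. nrm x \<le> 1}"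
  proof (rule bdd_aboveI)
    fix z assume "z \<in> {g \<bullet> x | x. nrm x \<le> 1}"
    then obtain x where x: "z = g \<bullet> x" "nrm x \<le> 1" by blast
    have "norm x \<le> 1 / k" using k x by (smt (verit) divide_pos_pos le_divide_eq mult.commute)
    then have "g \<bullet> x \<le> norm g * (1 / k)"
      by (meson Cauchy_Schwarz_ineq2 abs_le_D1 mult_left_mono norm_ge_zero order_trans)
    then show "z \<le> norm g / k" using x by simp
  qed
  have ny: "nrm y > 0" using False assms nrm_basic(3)[OF assms, of y] unfolding is_norm_def
    by (metis order_le_less)
  let ?v = "(1 / nrm y) *\<^sub>R y"
  have "nrm ?v = 1" using assms ny False unfolding is_norm_def by simp
  then have "g \<bullet> ?v \<le> dual_norm nrm g" unfolding dual_norm_def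
    by (intro cSup_upper bdd) (use \<open>nrm ?v = 1\<close> in \<open>auto intro!: exI[of _ ?v]\<close>)
  then show ?thesis using ny by (simp add: field_simps)
qed



definition SCr :: "'a set \<Rightarrow> ('a::euclidean_space \<Rightarrow> real) \<Rightarrow> ('a \<Rightarrow> real) \<Rightarrow> bool" where
  "SCr X nrm hr \<longleftrightarrow> (\<forall>x\<in>X. \<forall>y\<in>X. \<forall>u. 0 \<le> u \<and> u \<le> 1 \<longrightarrow>
      hr (u *\<^sub>R x + (1 - u) *\<^sub>R y) \<le> u * hr x + (1 - u) * hr y - u * (1 - u) / 2 * (nrm (x - y))\<^sup>2)"

lemma growth:
  assumes cx: "convex X" and sc: "SCr X nrm hr" and e: "e > 0" and z: "z \<in> X"
    and mn: "\<forall>y\<in>X. c \<bullet> z + hr z / e \<le> c \<bullet> y + hr y / e" and y: "y \<in> X"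
  shows "c \<bullet> z + hr z / e + (nrm (y - z))\<^sup>2 / (2 * e) \<le> c \<bullet> y + hr y / e"
proof (rule ccontr)
  define D where "D = c \<bullet> y + hr y / e - (c \<bullet> z + hr z / e)"
  define Q where "Q = (nrm (y - z))\<^sup>2 / (2 * e)"
  assume "\<not> ?thesis"
  then have DQ: "D < Q" unfolding D_def Q_def by simp
  have D0: "D \<ge> 0" using mn y unfolding D_def by auto
  have key: "(1 - u) * Q \<le> D" if u: "0 < u" "u < 1" for u
  proof -
    define w where "w = u *\<^sub>R y + (1 - u) *\<^sub>R z"
    have wX: "w \<in> X" using cx y z u unfolding w_def by (simp add: convex_def)
    have cw: "c \<bullet> w = u * (c \<bullet> y) + (1 - u) * (c \<bullet> z)" unfolding w_def
      by (simp add: inner_add_right)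
    have hw: "hr w \<le> u * hr y + (1 - u) * hr z - u * (1 - u) / 2 * (nrm (y - z))\<^sup>2"
      using sc y z u unfolding SCr_def w_def by auto
    have "c \<bullet> z + hr z / e \<le> c \<bullet> w + hr w / e" using mn wX by blast
    also have "\<dots> \<le> u * (c \<bullet> y) + (1 - u) * (c \<bullet> z)
       + (u * hr y + (1 - u) * hr z - u * (1 - u) / 2 * (nrm (y - z))\<^sup>2) / e"
      using hw e cw by (simp add: divide_right_mono)
    finally have le: "c \<bullet> z + hr z / e \<le> u * (c \<bullet> y) + (1 - u) * (c \<bullet> z)
       + (u * hr y + (1 - u) * hr z - u * (1 - u) / 2 * (nrm (y - z))\<^sup>2) / e" .
    have "u * D - u * ((1 - u) * Q) = (u * (c \<bullet> y) + (1 - u) * (c \<bullet> z)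
       + (u * hr y + (1 - u) * hr z - u * (1 - u) / 2 * (nrm (y - z))\<^sup>2) / e) - (c \<bullet> z + hr z / e)"
      unfolding D_def Q_def using e by (simp add: field_simps)
    then have "0 \<le> u * D - u * ((1 - u) * Q)" using le by linarith
    then have "u * ((1 - u) * Q) \<le> u * D" by simp
    then show ?thesis using u by simp
  qed
  have Qp: "Q > 0" using DQ D0 by simp
  define u where "u = (Q - D) / (2 * Q)"
  have "0 < u" "u < 1" using DQ D0 Qp unfolding u_def by (auto simp: field_simps)
  from key[OF this] have "(1 - u) * Q \<le> D" .
  moreover have "(1 - u) * Q = (Q + D) / 2" using Qp unfolding u_def by (simp add: field_simps)
  ultimately show False using DQ by simp
qed



lemma SCr_half:
  assumes sc: "SCr X nrm hr" and a: "a \<in> X" and b: "b \<in> X"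
  shows "hr ((1/2) *\<^sub>R a + (1/2) *\<^sub>R b) \<le> hr a / 2 + hr b / 2 - (nrm (a - b))\<^sup>2 / 8"
proof -
  have "hr ((1/2) *\<^sub>R a + (1 - 1/2) *\<^sub>R b) \<le> 1/2 * hr a + (1 - 1/2) * hr b - 1/2 * (1 - 1/2) / 2 * (nrm (a - b))\<^sup>2"
    using sc[unfolded SCr_def, rule_format, OF a b, of "1/2"] by simp
  then show ?thesis by simp
qed

lemma exists_min:
  fixes nrm :: "'a::euclidean_space \<Rightarrow> real"
  assumes nrm: "is_norm nrm" and cl: "closed X" and cx: "convex X" and p: "p \<in> X"
    and sc: "SCr X nrm hr" and hr0: "\<forall>y\<in>X. hr y \<ge> 0"
    and lsc: "\<forall>z\<in>X. \<forall>\<epsilon>>0. \<exists>\<delta>>0. \<forall>y\<in>X. dist y z < \<delta> \<longrightarrow> hr z - \<epsilon> < hr y"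
    and e: "e > 0"
  shows "\<exists>z\<in>X. \<forall>y\<in>X. c \<bullet> z + hr z / e \<le> c \<bullet> y + hr y / e"
proof -
  define \<Phi> where "\<Phi> y = c \<bullet> y + hr y / e" for y
  obtain k where k: "k > 0" "\<forall>x. k * norm x \<le> nrm x" using nrm_lower[OF nrm] by blast
  have mid: "\<Phi> ((1/2) *\<^sub>R a + (1/2) *\<^sub>R b) \<le> \<Phi> a / 2 + \<Phi> b / 2 - (nrm (a - b))\<^sup>2 / (8 * e)"
    if "a \<in> X" "b \<in> X" for a b
  proof -
    have h: "hr ((1/2) *\<^sub>R a + (1/2) *\<^sub>R b) \<le> hr a / 2 + hr b / 2 - (nrm (a - b))\<^sup>2 / 8"
      using SCr_half[OF sc that] .
    have "\<Phi> ((1/2) *\<^sub>R a + (1/2) *\<^sub>R b) = c \<bullet> a / 2 + c \<bullet> b / 2 + hr ((1/2) *\<^sub>R a + (1/2) *\<^sub>R b) / e"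
      unfolding \<Phi>_def by (simp add: inner_add_right)
    also have "\<dots> \<le> c \<bullet> a / 2 + c \<bullet> b / 2 + (hr a / 2 + hr b / 2 - (nrm (a - b))\<^sup>2 / 8) / e"
      using h e by (simp add: divide_right_mono)
    also have "\<dots> = \<Phi> a / 2 + \<Phi> b / 2 - (nrm (a - b))\<^sup>2 / (8 * e)"
      unfolding \<Phi>_def using e by (simp add: field_simps)
    finally show ?thesis .
  qed
  have midX: "(1/2) *\<^sub>R a + (1/2) *\<^sub>R b \<in> X" if "a \<in> X" "b \<in> X" for a b
    by (rule convexD[OF cx that]) auto
  define L where "L = norm c / k"
  have lb: "c \<bullet> p - e * L\<^sup>2 - hr p / e \<le> \<Phi> y" if y: "y \<in> X" for y
  proof -
    define d where "d = nrm (y - p)"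
    have "0 \<le> hr ((1/2) *\<^sub>R y + (1/2) *\<^sub>R p)" using hr0 midX[OF y p] by blast
    also have "\<dots> \<le> hr y / 2 + hr p / 2 - d\<^sup>2 / 8"
      using SCr_half[OF sc y p] unfolding d_def .
    finally have hy: "d\<^sup>2 / 4 - hr p \<le> hr y" by simp
    have "c \<bullet> (p - y) \<le> norm c * norm (y - p)"
      by (metis Cauchy_Schwarz_ineq2 abs_le_D1 norm_minus_commute)
    also have "norm (y - p) \<le> d / k" unfolding d_def using k by (simp add: field_simps mult.commute)
    then have "norm c * norm (y - p) \<le> norm c * (d / k)" by (rule mult_left_mono) simp
    finally have cy: "c \<bullet> p - L * d \<le> c \<bullet> y" unfolding L_def by (simp add: inner_diff_right)
    have sq: "0 \<le> (d - 2 * e * L)\<^sup>2 / (4 * e)" using e by simp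
    have "(d - 2 * e * L)\<^sup>2 / (4 * e) = d\<^sup>2 / (4 * e) - L * d + e * L\<^sup>2"
      using e by (simp add: field_simps power2_eq_square)
    with sq have "- L * d \<ge> - d\<^sup>2 / (4 * e) - e * L\<^sup>2" by simp
    moreover have "(d\<^sup>2 / 4 - hr p) / e \<le> hr y / e" using hy e by (simp add: divide_right_mono)
    moreover have "(d\<^sup>2 / 4 - hr p) / e = d\<^sup>2 / (4 * e) - hr p / e" using e by (simp add: field_simps)
    ultimately show ?thesis using cy unfolding \<Phi>_def by linarith
  qed
  define m where "m = Inf (\<Phi> ` X)"
  have bdd: "bdd_below (\<Phi> ` X)" by (rule bdd_belowI2[of X "c \<bullet> p - e * L\<^sup>2 - hr p / e"]) (rule lb)
  have mle: "m \<le> \<Phi> y" if "y \<in> X" for y unfolding m_def using bdd that by (simp add: cInf_lower)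
  have exy: "\<exists>y. y \<in> X \<and> \<Phi> y < m + 1 / real (Suc n)" for n
  proof -
    have "Inf (\<Phi> ` X) < m + 1 / real (Suc n)" unfolding m_def by simp
    moreover have "\<Phi> ` X \<noteq> {}" using p by blast
    ultimately obtain v where "v \<in> \<Phi> ` X" "v < m + 1 / real (Suc n)" using cInf_lessD by metis
    then show ?thesis by auto
  qed
  have "\<exists>ys. \<forall>n. ys n \<in> X \<and> \<Phi> (ys n) < m + 1 / real (Suc n)" by (rule choice) (use exy in blast)
  then obtain ys where ys: "\<And>n. ys n \<in> X" "\<And>n. \<Phi> (ys n) < m + 1 / real (Suc n)" by blast
  have dist_ys: "(norm (ys a - ys b))\<^sup>2 \<le> 8 * e / (k\<^sup>2 * real (Suc N))" if "a \<ge> N" "b \<ge> N" for a b N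
  proof -
    have "m \<le> \<Phi> ((1/2) *\<^sub>R ys a + (1/2) *\<^sub>R ys b)" using mle midX ys by blast
    with mid[OF ys(1)[of a] ys(1)[of b]] have "(nrm (ys a - ys b))\<^sup>2 / (8 * e) \<le> \<Phi> (ys a) / 2 + \<Phi> (ys b) / 2 - m"
      by linarith
    also have "\<dots> \<le> 1 / real (Suc N)"
    proof -
      have "1 / real (Suc a) \<le> 1 / real (Suc N)" "1 / real (Suc b) \<le> 1 / real (Suc N)"
        using that by (simp_all add: frac_le)
      then show ?thesis using ys(2)[of a] ys(2)[of b] by linarith
    qed
    finally have n1: "(nrm (ys a - ys b))\<^sup>2 \<le> 8 * e / real (Suc N)" using e by (simp add: field_simps)
    have "k * norm (ys a - ys b) \<le> nrm (ys a - ys b)" using k by blast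
    then have "(k * norm (ys a - ys b))\<^sup>2 \<le> (nrm (ys a - ys b))\<^sup>2"
      using k by (intro power_mono) auto
    with n1 have "k\<^sup>2 * (norm (ys a - ys b))\<^sup>2 \<le> 8 * e / real (Suc N)" by (simp add: power_mult_distrib)
    then have "k\<^sup>2 * (norm (ys a - ys b))\<^sup>2 * real (Suc N) \<le> 8 * e"
      by (simp add: pos_le_divide_eq del: of_nat_Suc)
    moreover have pos: "k\<^sup>2 * real (Suc N) > 0" using k by simp
    ultimately show ?thesis
      by (subst pos_le_divide_eq[OF pos]) (simp add: ac_simps del: of_nat_Suc)
  qed
  have "Cauchy ys"
  proof (rule CauchyI)
    fix \<epsilon> :: real assume ep: "\<epsilon> > 0"
    obtain N where N: "8 * e / (k\<^sup>2 * \<epsilon>\<^sup>2) < real N" using reals_Archimedean2 by blast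
    have pos: "k\<^sup>2 * real (Suc N) > 0" "k\<^sup>2 * \<epsilon>\<^sup>2 > 0" using k ep by auto
    have "8 * e < real N * (k\<^sup>2 * \<epsilon>\<^sup>2)" using N pos(2) by (simp add: pos_divide_less_eq)
    also have "\<dots> \<le> \<epsilon>\<^sup>2 * (k\<^sup>2 * real (Suc N))" using pos by (simp add: algebra_simps)
    finally have "8 * e / (k\<^sup>2 * real (Suc N)) < \<epsilon>\<^sup>2"
      by (subst pos_divide_less_eq[OF pos(1)])
    then have "\<forall>a\<ge>N. \<forall>b\<ge>N. norm (ys a - ys b) < \<epsilon>"
      using dist_ys ep by (meson le_less_trans norm_ge_zero power_less_imp_less_base less_imp_le)
    then show "\<exists>M. \<forall>a\<ge>M. \<forall>b\<ge>M. norm (ys a - ys b) < \<epsilon>" by blast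
  qed
  then obtain z where lim: "ys \<longlonglongrightarrow> z" using Cauchy_convergent_iff convergent_def by blast
  have zX: "z \<in> X" using closed_sequentially[OF cl] ys(1) lim by blast
  have "\<Phi> z \<le> m"
  proof (rule field_le_epsilon)
    fix \<epsilon> :: real assume ep: "\<epsilon> > 0"
    define \<epsilon>' where "\<epsilon>' = \<epsilon> / 3"
    have ep': "\<epsilon>' > 0" using ep unfolding \<epsilon>'_def by simp
    obtain \<delta> where \<delta>: "\<delta> > 0" "\<forall>y\<in>X. dist y z < \<delta> \<longrightarrow> hr z - \<epsilon>' * e < hr y"
      using lsc[rule_format, OF zX, of "\<epsilon>' * e"] ep' e by auto
    define r where "r = min \<delta> (\<epsilon>' / (norm c + 1))"
    have "norm c + 1 > 0" by (simp add: add_nonneg_pos)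
    then have "\<epsilon>' / (norm c + 1) > 0" using ep' by simp
    have r: "r > 0" using \<delta> ep' using \<open>\<epsilon>' / (norm c + 1) > 0\<close> unfolding r_def by simp
    obtain N1 where N1: "\<forall>n\<ge>N1. dist (ys n) z < r" using lim r unfolding lim_sequentially by blast
    obtain N2 where N2: "1 / real (Suc N2) < \<epsilon>'" using reals_Archimedean[OF ep'] by (auto simp: inverse_eq_divide)
    define n where "n = max N1 N2"
    have dn: "dist (ys n) z < r" using N1 unfolding n_def by simp
    have "1 / real (Suc n) \<le> 1 / real (Suc N2)" unfolding n_def by (simp add: frac_le)
    with N2 ys(2)[of n] have p1: "\<Phi> (ys n) < m + \<epsilon>'" by linarith
    have "hr z - \<epsilon>' * e < hr (ys n)" using \<delta> ys(1) dn unfolding r_def by auto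
    then have p2: "hr z / e < hr (ys n) / e + \<epsilon>'" using e by (simp add: field_simps)
    have "c \<bullet> (z - ys n) \<le> norm c * norm (z - ys n)" by (metis Cauchy_Schwarz_ineq2 abs_le_D1)
    also have "\<dots> \<le> norm c * (\<epsilon>' / (norm c + 1))"
      using dn unfolding r_def by (intro mult_left_mono) (auto simp: dist_norm norm_minus_commute)
    also have "\<dots> \<le> \<epsilon>'"
    proof -
      have "norm c * (\<epsilon>' / (norm c + 1)) = \<epsilon>' * (norm c / (norm c + 1))" by simp
      moreover have "norm c / (norm c + 1) \<le> 1" by (simp add: divide_le_eq_1 add_nonneg_pos)
      then have "\<epsilon>' * (norm c / (norm c + 1)) \<le> \<epsilon>' * 1" using ep' by (intro mult_left_mono) auto
      ultimately show ?thesis by (simp add: mult.commute)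
    qed
    finally have p3: "c \<bullet> z \<le> c \<bullet> ys n + \<epsilon>'" by (simp add: inner_diff_right)
    show "\<Phi> z \<le> m + \<epsilon>" using p1 p2 p3 unfolding \<Phi>_def \<epsilon>'_def by linarith
  qed
  then have "\<forall>y\<in>X. \<Phi> z \<le> \<Phi> y" using mle by force
  then show ?thesis using zX unfolding \<Phi>_def by blast
qed



lemma quad_bound:
  fixes G q e :: real
  assumes "e > 0"
  shows "G * q - q\<^sup>2 / (2 * e) \<le> e * G\<^sup>2 / 2"
proof -
  have "0 \<le> (q - e * G)\<^sup>2 / (2 * e)" using assms by simp
  also have "(q - e * G)\<^sup>2 / (2 * e) = q\<^sup>2 / (2 * e) - G * q + e * G\<^sup>2 / 2"
    using assms by (simp add: field_simps power2_eq_square)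
  finally show ?thesis by simp
qed

lemma step:
  fixes nrm :: "'a::euclidean_space \<Rightarrow> real" and g :: "nat \<Rightarrow> 'a"
  assumes nrm: "is_norm nrm" and cx: "convex X" and sc: "SCr X nrm hr" and e: "e > 0"
    and EX: "\<forall>c. \<exists>z\<in>X. \<forall>y\<in>X. c \<bullet> z + hr z / e \<le> c \<bullet> y + hr y / e"
    and finS: "finite S" and finD: "finite D" and disj: "S \<inter> D = {}" and cD: "card D \<le> \<tau>"
    and gD: "\<forall>s\<in>D. \<forall>v. g s \<bullet> v \<le> G * nrm v" and gt: "\<forall>v. gt \<bullet> v \<le> G * nrm v" and G: "G \<ge> 0"
    and xt: "xt \<in> X"
    and mn: "\<forall>y\<in>X. (\<Sum>s\<in>S. g s) \<bullet> xt + hr xt / e \<le> (\<Sum>s\<in>S. g s) \<bullet> y + hr y / e"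
    and IH: "\<forall>y\<in>X. E \<le> (\<Sum>s\<in>S \<union> D. g s) \<bullet> y + hr y / e"
  shows "\<forall>y\<in>X. E + gt \<bullet> xt - e * G\<^sup>2 * (1 + 2 * real \<tau>) / 2 \<le> ((\<Sum>s\<in>S \<union> D. g s) + gt) \<bullet> y + hr y / e"
proof
  fix y assume y: "y \<in> X"
  define a where "a = (\<Sum>s\<in>S. g s)"
  define b where "b = (\<Sum>s\<in>D. g s)"
  have ab: "(\<Sum>s\<in>S \<union> D. g s) = a + b" unfolding a_def b_def using finS finD disj
    by (simp add: sum.union_disjoint)
  obtain z where z: "z \<in> X" "\<forall>y\<in>X. (a + b) \<bullet> z + hr z / e \<le> (a + b) \<bullet> y + hr y / e"
    using EX by blast
  have bb: "b \<bullet> v \<le> real \<tau> * G * nrm v" for v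
  proof -
    have "b \<bullet> v = (\<Sum>s\<in>D. g s \<bullet> v)" unfolding b_def by (simp add: inner_sum_left)
    also have "\<dots> \<le> (\<Sum>s\<in>D. G * nrm v)" by (rule sum_mono) (use gD in blast)
    also have "\<dots> = real (card D) * (G * nrm v)" by simp
    also have "\<dots> \<le> real \<tau> * (G * nrm v)"
      using cD G nrm_basic(3)[OF nrm, of v] by (intro mult_right_mono) auto
    finally show ?thesis by simp
  qed
  define d where "d = nrm (xt - z)"
  have d0: "d \<ge> 0" unfolding d_def using nrm_basic(3)[OF nrm] by blast
  have g1: "a \<bullet> xt + hr xt / e + (nrm (z - xt))\<^sup>2 / (2 * e) \<le> a \<bullet> z + hr z / e"
    using growth[OF cx sc e xt _ z(1)] mn unfolding a_def by blast
  have g2: "(a + b) \<bullet> z + hr z / e + (nrm (xt - z))\<^sup>2 / (2 * e) \<le> (a + b) \<bullet> xt + hr xt / e"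
    using growth[OF cx sc e z(1) z(2) xt] .
  have "nrm (z - xt) = d" unfolding d_def by (rule nrm_basic(4)[OF nrm])
  moreover have "d\<^sup>2 / e = d\<^sup>2 / (2 * e) + d\<^sup>2 / (2 * e)" by (simp add: field_simps)
  ultimately have "d\<^sup>2 / e \<le> b \<bullet> xt - b \<bullet> z" using g1 g2 unfolding d_def by (simp add: inner_add_left)
  also have "\<dots> = b \<bullet> (xt - z)" by (simp add: inner_diff_right)
  also have "\<dots> \<le> real \<tau> * G * d" unfolding d_def by (rule bb)
  finally have dd: "d\<^sup>2 / e \<le> real \<tau> * G * d" .
  have dle: "G * d \<le> e * real \<tau> * G\<^sup>2"
  proof (cases "d = 0")
    case True then show ?thesis using G e by simp
  next
    case False
    then have dp: "d > 0" using d0 by simp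
    have "d * d \<le> e * (real \<tau> * G * d)" using dd e by (simp add: power2_eq_square field_simps)
    then have "d \<le> e * real \<tau> * G" using dp by (simp add: mult.commute mult.left_commute)
    then have "G * d \<le> G * (e * real \<tau> * G)" using G by (rule mult_left_mono)
    then show ?thesis by (simp add: power2_eq_square mult_ac)
  qed
  define q where "q = nrm (y - z)"
  have g3: "(a + b) \<bullet> z + hr z / e + q\<^sup>2 / (2 * e) \<le> (a + b) \<bullet> y + hr y / e"
    unfolding q_def using growth[OF cx sc e z(1) z(2) y] .
  have I: "E \<le> (a + b) \<bullet> z + hr z / e" using IH z(1) ab by simp
  have t1: "gt \<bullet> (z - y) \<le> G * q" using gt[rule_format, of "z - y"] unfolding q_def nrm_basic(4)[OF nrm, of z y] .
  have t2: "gt \<bullet> (xt - z) \<le> G * d" using gt[rule_format, of "xt - z"] unfolding d_def by linarith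
  have qb: "G * q - q\<^sup>2 / (2 * e) \<le> e * G\<^sup>2 / 2" by (rule quad_bound[OF e])
  have "e * G\<^sup>2 * (1 + 2 * real \<tau>) / 2 = e * G\<^sup>2 / 2 + e * real \<tau> * G\<^sup>2" by (simp add: field_simps)
  show "E + gt \<bullet> xt - e * G\<^sup>2 * (1 + 2 * real \<tau>) / 2 \<le> ((\<Sum>s\<in>S \<union> D. g s) + gt) \<bullet> y + hr y / e"
  proof -
    have A: "((a + b) + gt) \<bullet> y + hr y / e = (a + b) \<bullet> y + hr y / e + gt \<bullet> y" by (simp add: inner_add_left)
    have B: "gt \<bullet> y \<ge> gt \<bullet> xt - G * d - G * q" using t1 t2 by (simp add: inner_diff_right)
    show ?thesis unfolding ab A using B g3 I qb dle \<open>e * G\<^sup>2 * (1 + 2 * real \<tau>) / 2 = _\<close> by linarith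
  qed
qed



lemma regret_step:
  assumes "g \<in> subdiff f x" "subdiff f p \<noteq> {}"
  shows "real_of_ereal (f x) - real_of_ereal (f p) \<le> g \<bullet> x - g \<bullet> p"
proof -
  have fx: "\<bar>f x\<bar> \<noteq> \<infinity>" and le: "f p \<ge> f x + ereal (g \<bullet> (p - x))"
    using assms(1) unfolding subdiff_def by auto
  have fp: "\<bar>f p\<bar> \<noteq> \<infinity>" using assms(2) unfolding subdiff_def by auto
  obtain a where a: "f x = ereal a" using fx by (cases "f x") auto
  obtain b where b: "f p = ereal b" using fp by (cases "f p") auto
  from le have "a + g \<bullet> (p - x) \<le> b" using a b by simp
  then show ?thesis using a b by (simp add: inner_diff_right)
qed

lemma SCr_from:
  fixes nrm :: "'a::euclidean_space \<Rightarrow> real"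
  assumes sc: "strongly_convex_on X nrm h" and cx: "convex X" and hf: "\<forall>y\<in>X. h y = ereal (hr y)"
  shows "SCr X nrm hr"
  unfolding SCr_def
proof (intro ballI allI impI)
  fix x y and u :: real assume x: "x \<in> X" and y: "y \<in> X" and u: "0 \<le> u \<and> u \<le> 1"
  have w: "u *\<^sub>R x + (1 - u) *\<^sub>R y \<in> X" using convexD[OF cx x y, of u "1 - u"] u by auto
  have "h (u *\<^sub>R x + (1 - u) *\<^sub>R y) \<le> ereal u * h x + ereal (1 - u) * h y
        - ereal (u * (1 - u) / 2 * (nrm (x - y))\<^sup>2)"
    using sc x y u unfolding strongly_convex_on_def by blast
  then show "hr (u *\<^sub>R x + (1 - u) *\<^sub>R y) \<le> u * hr x + (1 - u) * hr y - u * (1 - u) / 2 * (nrm (x - y))\<^sup>2"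
    using hf x y w by simp
qed

lemma lsc_from:
  fixes h :: "'a::euclidean_space \<Rightarrow> ereal"
  assumes lsc: "lower_semicont h" and hf: "\<forall>y\<in>X. h y = ereal (hr y)"
  shows "\<forall>z\<in>X. \<forall>\<epsilon>>0. \<exists>\<delta>>0. \<forall>y\<in>X. dist y z < \<delta> \<longrightarrow> hr z - \<epsilon> < hr y"
proof (intro ballI allI impI)
  fix z :: 'a and \<epsilon> :: real assume z: "z \<in> X" and ep: "\<epsilon> > 0"
  have "h z \<le> Liminf (at z) h" using lsc unfolding lower_semicont_def by blast
  moreover have "ereal (hr z - \<epsilon>) < h z" using hf z ep by simp
  ultimately have "eventually (\<lambda>y. ereal (hr z - \<epsilon>) < h y) (at z)"
    using le_Liminf_iff by blast
  then obtain d where d: "d > 0" "\<forall>y. y \<noteq> z \<and> dist y z < d \<longrightarrow> ereal (hr z - \<epsilon>) < h y"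
    unfolding eventually_at by auto
  have "\<forall>y\<in>X. dist y z < d \<longrightarrow> hr z - \<epsilon> < hr y"
  proof (intro ballI impI)
    fix y assume y: "y \<in> X" "dist y z < d"
    show "hr z - \<epsilon> < hr y"
    proof (cases "y = z")
      case True then show ?thesis using ep by simp
    next
      case False then show ?thesis using d y hf by auto
    qed
  qed
  then show "\<exists>\<delta>>0. \<forall>y\<in>X. dist y z < \<delta> \<longrightarrow> hr z - \<epsilon> < hr y" using d by blast
qed

lemma sum_inv_sqrt: "(\<Sum>t=1..T. 1 / (2 * sqrt (real t))) \<le> sqrt (real T)"
proof (induction T)
  case 0 then show ?case by simp
next
  case (Suc T)
  define a where "a = sqrt (real (Suc T))"
  define b where "b = sqrt (real T)"
  have a2: "a\<^sup>2 = b\<^sup>2 + 1" unfolding a_def b_def by simp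
  have b0: "b \<ge> 0" unfolding b_def by simp
  have a0: "a > 0" unfolding a_def by simp
  have "2 * a * b \<le> a\<^sup>2 + b\<^sup>2" by (smt (verit) sum_squares_bound)
  then have "b + 1 / (2 * a) \<le> a" using a0 a2 by (simp add: field_simps power2_eq_square)
  then show ?case using Suc unfolding a_def b_def by simp
qed

lemma cst_bound:
  fixes r G :: real and n t \<tau> :: nat
  assumes r: "r > 0" and G: "G > 0" and t: "t \<ge> 1" "t \<le> n + \<tau> + 1"
  shows "r / (G * sqrt ((1 + 2 * real \<tau>) * (real n + real \<tau> + 1))) * G\<^sup>2 * (1 + 2 * real \<tau>) / 2
         \<le> r * G * sqrt (1 + 2 * real \<tau>) * (1 / (2 * sqrt (real t)))"
proof -
  define s where "s = sqrt (1 + 2 * real \<tau>)"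
  define w where "w = sqrt (real n + real \<tau> + 1)"
  have s0: "s > 0" unfolding s_def by simp
  have ss: "s * s = 1 + 2 * real \<tau>" unfolding s_def by simp
  have "w > 0" unfolding w_def by simp
  have tw: "sqrt (real t) \<le> w" unfolding w_def using t by simp
  have t0: "sqrt (real t) > 0" using t by simp
  have "r / (G * sqrt ((1 + 2 * real \<tau>) * (real n + real \<tau> + 1))) * G\<^sup>2 * (1 + 2 * real \<tau>) / 2
        = r * G * s / (2 * w)"
  proof -
    have "sqrt ((1 + 2 * real \<tau>) * (real n + real \<tau> + 1)) = s * w"
      unfolding s_def w_def by (simp add: real_sqrt_mult)
    then have "r / (G * sqrt ((1 + 2 * real \<tau>) * (real n + real \<tau> + 1))) * G\<^sup>2 * (1 + 2 * real \<tau>) / 2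
        = r / (G * (s * w)) * G\<^sup>2 * (s * s) / 2" unfolding ss by simp
    also have "\<dots> = r * G * s / (2 * w)"
      using G s0 \<open>w > 0\<close> by (simp add: field_simps power2_eq_square)
    finally show ?thesis .
  qed
  also have "\<dots> \<le> r * G * s / (2 * sqrt (real t))"
    using tw t0 r G s0 \<open>w > 0\<close> by (intro divide_left_mono) auto
  finally show ?thesis unfolding s_def by simp
qed



theorem proposition4:
  fixes nrm :: "'a::euclidean_space \<Rightarrow> real"
    and X :: "'a set"
    and h :: "'a \<Rightarrow> ereal"
    and f :: "nat \<Rightarrow> 'a \<Rightarrow> ereal"
    and g x :: "nat \<Rightarrow> 'a"
    and agent :: "nat \<Rightarrow> 'i"
    and SA :: "'i \<Rightarrow> nat \<Rightarrow> nat set"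
    and \<eta> :: "nat \<Rightarrow> real"
    and T \<tau> :: nat and G r :: real and p :: 'a
  defines "S \<equiv> (\<lambda>t. SA (agent t) t)"
  defines "\<eta> \<equiv> (\<lambda>t. r / (G * sqrt ((1 + 2 * real \<tau>) * (real (card (S t)) + real \<tau> + 1))))"
  assumes norm: "is_norm nrm"
    and X_closed: "closed X" and X_convex: "convex X"
    and h_lsc: "lower_semicont h"
    and h_sc: "strongly_convex_on X nrm h"
    and X_dom: "\<forall>y\<in>X. h y < \<infinity>"
    and h_sel: "\<exists>\<sigma>. continuous_on (dom_subdiff h) \<sigma> \<and> (\<forall>y\<in>dom_subdiff h. \<sigma> y \<in> subdiff h y)"
    and h_nonneg: "\<forall>y. h y \<ge> 0"
    and f_convex: "\<forall>t\<in>{1..T}. ereal_convex (f t)"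
    and f_dom: "\<forall>t\<in>{1..T}. X \<subseteq> dom_subdiff (f t)"
    and S_sub: "\<forall>i t. SA i t \<subseteq> {1..<t}"
    and S_mono: "\<forall>i t t'. t \<le> t' \<longrightarrow> SA i t \<subseteq> SA i t'"
    and delay: "\<forall>t\<in>{1..T}. {1..t - \<tau> - 1} \<subseteq> S t"
    and S_card: "\<forall>t\<in>{1..T}. \<forall>s\<in>S t. card (S s) < card (S t)"
    and G_pos: "G > 0" and r_pos: "r > 0"
    and g_bound: "\<forall>t\<in>{1..T}. dual_norm nrm (g t) \<le> G"
    and x_in: "\<forall>t\<in>{1..T}. x t \<in> X"
    and g_sub: "\<forall>t\<in>{1..T}. g t \<in> subdiff (f t) (x t)"
    and DDA: "\<forall>t\<in>{1..T}. \<forall>y\<in>X.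
        (\<Sum>s\<in>S t. g s \<bullet> x t) + real_of_ereal (h (x t)) / \<eta> t
          \<le> (\<Sum>s\<in>S t. g s \<bullet> y) + real_of_ereal (h y) / \<eta> t"
    and p_in: "p \<in> X" and p_h: "h p \<le> ereal (r\<^sup>2)"
  shows "(\<Sum>t=1..T. real_of_ereal (f t (x t)) - real_of_ereal (f t p))
           \<le> 2 * r * G * sqrt ((real T + real \<tau>) * (1 + 2 * real \<tau>))"
proof -
  define hr where "hr y = real_of_ereal (h y)" for y
  have hf: "\<forall>y\<in>X. h y = ereal (hr y)"
  proof
    fix y assume y: "y \<in> X"
    have "h y \<ge> 0" "h y < \<infinity>" using h_nonneg X_dom y by auto
    then have "\<bar>h y\<bar> \<noteq> \<infinity>" by auto
    then show "h y = ereal (hr y)" unfolding hr_def by (simp add: ereal_real')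
  qed
  have hr0: "\<forall>y\<in>X. hr y \<ge> 0" using h_nonneg unfolding hr_def by (simp add: real_of_ereal_pos)
  have sc: "SCr X nrm hr" by (rule SCr_from[OF h_sc X_convex hf])
  have lscr: "\<forall>z\<in>X. \<forall>\<epsilon>>0. \<exists>\<delta>>0. \<forall>y\<in>X. dist y z < \<delta> \<longrightarrow> hr z - \<epsilon> < hr y"
    by (rule lsc_from[OF h_lsc hf])
  have EX: "\<forall>c. \<exists>z\<in>X. \<forall>y\<in>X. c \<bullet> z + hr z / e \<le> c \<bullet> y + hr y / e" if "e > 0" for e
    using exists_min[OF norm X_closed X_convex p_in sc hr0 lscr that] by blast
  have regret: "real_of_ereal (f t (x t)) - real_of_ereal (f t p) \<le> g t \<bullet> x t - g t \<bullet> p"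
    if "t \<in> {1..T}" for t
    using regret_step[OF g_sub[rule_format, OF that]] f_dom that p_in
    unfolding dom_subdiff_def by blast
  show ?thesis
  proof (cases "T = 0")
    case True
    then show ?thesis using G_pos r_pos by simp
  next
    case False
    then have T1: "T \<ge> 1" by simp
    define n where "n t = card (S t)" for t
    have finS: "finite (S t)" for t
      using S_sub finite_subset[of "S t" "{1..<t}"] unfolding S_def by auto
    have Ssub: "S t \<subseteq> {1..<t}" for t using S_sub unfolding S_def by auto
    define cst where "cst t = \<eta> t * G\<^sup>2 * (1 + 2 * real \<tau>) / 2" for t
    define key where "key t = n t * (T + 1) + t" for t
    define Q where "Q j = {t\<in>{1..T}. key t < j}" for j
    define E where "E j = (\<Sum>t\<in>Q j. g t \<bullet> x t - cst t)" for j
    have gb: "\<forall>v. g t \<bullet> v \<le> G * nrm v" if "t \<in> {1..T}" for t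
    proof
      fix v
      have "g t \<bullet> v \<le> dual_norm nrm (g t) * nrm v" by (rule dual_bound[OF norm])
      also have "\<dots> \<le> G * nrm v" using g_bound that nrm_basic(3)[OF norm, of v]
        by (intro mult_right_mono) auto
      finally show "g t \<bullet> v \<le> G * nrm v" .
    qed
    have eta_pos: "\<eta> t > 0" for t
      unfolding \<eta>_def using G_pos r_pos by (simp add: add_pos_nonneg)
    have eta_mono: "\<eta> t \<le> \<eta> u" if "n u \<le> n t" for t u
    proof -
      have "sqrt ((1 + 2 * real \<tau>) * (real (card (S u)) + real \<tau> + 1))
         \<le> sqrt ((1 + 2 * real \<tau>) * (real (card (S t)) + real \<tau> + 1))"
        using that unfolding n_def by (intro real_sqrt_le_mono mult_left_mono) auto
      moreover have "0 < sqrt ((1 + 2 * real \<tau>) * (real (card (S u)) + real \<tau> + 1))"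
        by (simp add: add_pos_nonneg)
      ultimately show ?thesis unfolding \<eta>_def using G_pos r_pos
        by (intro divide_left_mono mult_left_mono mult_pos_pos) auto
    qed
    have delay_card: "u \<le> n u + \<tau> + 1" if "u \<in> {1..T}" for u
    proof -
      have "card {1..u - \<tau> - 1} \<le> n u"
        unfolding n_def using delay that finS by (intro card_mono) auto
      then show ?thesis by simp
    qed
    have n_lt: "n t + 1 \<le> t" if "t \<ge> 1" for t
    proof -
      have "n t \<le> card {1..<t}" unfolding n_def using Ssub by (intro card_mono) auto
      then show ?thesis using that by simp
    qed
    have key_lt: "key u < key t" if "u \<in> {1..T}" "t \<in> {1..T}" "n u < n t" for u t
    proof -
      have "(n u + 1) * (T + 1) \<le> n t * (T + 1)" using that(3) by (intro mult_right_mono) auto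
      then show ?thesis unfolding key_def using that(1,2) by (simp add: algebra_simps)
    qed
    have key_le: "n u \<le> n t" if "u \<in> {1..T}" "t \<in> {1..T}" "key u < key t" for u t
      using key_lt[OF that(2,1)] that(3) by (meson not_le less_asym)
    have key_inj: "u = t" if "u \<in> {1..T}" "t \<in> {1..T}" "key u = key t" for u t
    proof -
      have "n u = n t" using key_lt[OF that(1,2)] key_lt[OF that(2,1)] that(3)
        by (metis less_irrefl nat_neq_iff)
      then show ?thesis using that(3) unfolding key_def by simp
    qed
    have inv: "\<forall>e>0. (\<forall>u\<in>Q j. e \<le> \<eta> u) \<longrightarrow> (\<forall>y\<in>X. E j \<le> (\<Sum>s\<in>Q j. g s) \<bullet> y + hr y / e)" for j
    proof (induction j)
      case 0
      have "Q 0 = {}" unfolding Q_def by simp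
      then show ?case unfolding E_def using hr0 by simp
    next
      case (Suc j)
      show ?case
      proof (cases "\<exists>t\<in>{1..T}. key t = j")
        case False
        then have "Q (Suc j) = Q j" unfolding Q_def by (auto simp: less_Suc_eq)
        then show ?thesis using Suc.IH unfolding E_def by simp
      next
        case True
        then obtain t where t: "t \<in> {1..T}" "key t = j" by blast
        have QS: "Q (Suc j) = insert t (Q j)"
        proof (rule set_eqI)
          fix u
          show "u \<in> Q (Suc j) \<longleftrightarrow> u \<in> insert t (Q j)"
          proof
            assume "u \<in> Q (Suc j)"
            then have u: "u \<in> {1..T}" "key u < Suc j" unfolding Q_def by auto
            show "u \<in> insert t (Q j)"
            proof (cases "key u = j")
              case True
              then have "u = t" using key_inj[OF u(1) t(1)] t(2) by simp
              then show ?thesis by simp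
            next
              case False
              then have "key u < j" using u(2) by simp
              then show ?thesis using u(1) unfolding Q_def by simp
            qed
          next
            assume "u \<in> insert t (Q j)"
            then show "u \<in> Q (Suc j)" using t unfolding Q_def by auto
          qed
        qed
        have tQ: "t \<notin> Q j" unfolding Q_def using t by simp
        have finQ: "finite (Q j)" unfolding Q_def by simp
        have St: "S t \<subseteq> Q j"
        proof
          fix s assume s: "s \<in> S t"
          have s1: "s \<in> {1..T}" using Ssub[of t] s t by auto
          have "n s < n t" using S_card t s unfolding n_def by blast
          then show "s \<in> Q j" unfolding Q_def using key_lt[OF s1 t(1)] t s1 by simp
        qed
        define D where "D = Q j - S t"
        have QD: "Q j = S t \<union> D" using St unfolding D_def by auto
        have disj: "S t \<inter> D = {}" unfolding D_def by auto
        have finD: "finite D" unfolding D_def using finQ by simp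
        have cD: "card D \<le> \<tau>"
        proof -
          have tb: "t \<le> n t + \<tau> + 1" using delay_card t(1) by blast
          have sub1: "D \<subseteq> {1..n t + \<tau> + 1} - insert t (S t)"
          proof
            fix u assume u: "u \<in> D"
            then have uQ: "u \<in> Q j" "u \<notin> S t" unfolding D_def by auto
            then have u1: "u \<in> {1..T}" "key u < key t" unfolding Q_def using t by auto
            have "n u \<le> n t" using key_le[OF u1(1) t(1) u1(2)] .
            moreover have "u \<le> n u + \<tau> + 1" using delay_card u1(1) by blast
            ultimately show "u \<in> {1..n t + \<tau> + 1} - insert t (S t)" using u1 uQ tQ by auto
          qed
          have sub2: "insert t (S t) \<subseteq> {1..n t + \<tau> + 1}" using Ssub[of t] tb t(1) by auto
          have ct: "card (insert t (S t)) = n t + 1"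
            using Ssub[of t] finS unfolding n_def by (subst card_insert_disjoint) auto
          have "card D \<le> card ({1..n t + \<tau> + 1} - insert t (S t))"
            using sub1 by (intro card_mono) auto
          also have "\<dots> = (n t + \<tau> + 1) - (n t + 1)"
            using sub2 ct by (subst card_Diff_subset) (auto intro: finite_subset)
          finally show ?thesis by simp
        qed
        have eta_le: "\<eta> t \<le> \<eta> u" if "u \<in> Q j" for u
        proof -
          have "u \<in> {1..T}" "key u < key t" using that t unfolding Q_def by auto
          then show ?thesis using key_le t(1) eta_mono by blast
        qed
        have IHt: "\<forall>y\<in>X. E j \<le> (\<Sum>s\<in>S t \<union> D. g s) \<bullet> y + hr y / \<eta> t"
          using Suc.IH eta_pos[of t] eta_le unfolding QD[symmetric] by blast
        have mn: "\<forall>y\<in>X. (\<Sum>s\<in>S t. g s) \<bullet> x t + hr (x t) / \<eta> t \<le> (\<Sum>s\<in>S t. g s) \<bullet> y + hr y / \<eta> t"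
          using DDA t(1) unfolding hr_def by (simp add: inner_sum_left)
        have gD: "\<forall>s\<in>D. \<forall>v. g s \<bullet> v \<le> G * nrm v"
          using gb QD unfolding Q_def by blast
        have stp: "\<forall>y\<in>X. E j + g t \<bullet> x t - \<eta> t * G\<^sup>2 * (1 + 2 * real \<tau>) / 2
                    \<le> ((\<Sum>s\<in>S t \<union> D. g s) + g t) \<bullet> y + hr y / \<eta> t"
          by (rule step[OF norm X_convex sc eta_pos EX[OF eta_pos] finS finD disj cD gD gb[OF t(1)]
                _ x_in[rule_format, OF t(1)] mn IHt]) (use G_pos in simp)
        have sumQ: "(\<Sum>s\<in>Q (Suc j). g s) = (\<Sum>s\<in>S t \<union> D. g s) + g t"
          unfolding QS using finQ tQ QD by (simp add: add.commute)
        have EQ: "E (Suc j) = E j + (g t \<bullet> x t - cst t)"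
          unfolding E_def QS using finQ tQ by simp
        show ?thesis
        proof (intro allI impI ballI)
          fix e y assume e: "e > 0" and eu: "\<forall>u\<in>Q (Suc j). e \<le> \<eta> u" and y: "y \<in> X"
          have "e \<le> \<eta> t" using eu QS by blast
          then have "hr y / \<eta> t \<le> hr y / e" using e hr0 y by (intro divide_left_mono) auto
          then show "E (Suc j) \<le> (\<Sum>s\<in>Q (Suc j). g s) \<bullet> y + hr y / e"
            using stp y unfolding EQ sumQ cst_def by force
        qed
      qed
    qed
    define K where "K = (T + 1) * (T + 1)"
    have QK: "Q K = {1..T}"
    proof -
      have "key t < K" if "t \<in> {1..T}" for t
      proof -
        have "(n t + 1) * (T + 1) \<le> T * (T + 1)" using n_lt[of t] that by (intro mult_right_mono) auto
        then show ?thesis unfolding key_def K_def using that by (simp add: algebra_simps)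
      qed
      then show ?thesis unfolding Q_def by auto
    qed
    define es where "es = r / (G * sqrt ((1 + 2 * real \<tau>) * (real T + real \<tau>)))"
    have es_pos: "es > 0" unfolding es_def using G_pos r_pos T1 by (simp add: add_pos_nonneg)
    have es_le: "es \<le> \<eta> u" if "u \<in> {1..T}" for u
    proof -
      have "real (card (S u)) + real \<tau> + 1 \<le> real T + real \<tau>" using n_lt[of u] that unfolding n_def by auto
      then have "sqrt ((1 + 2 * real \<tau>) * (real (card (S u)) + real \<tau> + 1))
         \<le> sqrt ((1 + 2 * real \<tau>) * (real T + real \<tau>))"
        by (intro real_sqrt_le_mono mult_left_mono) auto
      moreover have "0 < sqrt ((1 + 2 * real \<tau>) * (real (card (S u)) + real \<tau> + 1))"
        by (simp add: add_pos_nonneg)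
      ultimately show ?thesis unfolding \<eta>_def es_def using G_pos r_pos
        by (intro divide_left_mono mult_left_mono mult_pos_pos) auto
    qed
    have main: "E K \<le> (\<Sum>s\<in>{1..T}. g s) \<bullet> p + hr p / es"
      using inv[of K] es_pos es_le p_in unfolding QK by blast
    have EK: "E K = (\<Sum>t=1..T. g t \<bullet> x t) - (\<Sum>t=1..T. cst t)"
      unfolding E_def QK by (simp add: sum_subtractf)
    define s2 where "s2 = sqrt (1 + 2 * real \<tau>)"
    have hp: "hr p \<le> r\<^sup>2" using p_h hf p_in by simp
    have term1: "hr p / es \<le> r * G * (s2 * sqrt (real T + real \<tau>))"
    proof -
      have "hr p / es = hr p * (G * sqrt ((1 + 2 * real \<tau>) * (real T + real \<tau>))) / r"
        unfolding es_def using r_pos by simp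
      also have "\<dots> \<le> r\<^sup>2 * (G * sqrt ((1 + 2 * real \<tau>) * (real T + real \<tau>))) / r"
        using hp G_pos r_pos by (intro divide_right_mono mult_right_mono) auto
      also have "\<dots> = r * G * (s2 * sqrt (real T + real \<tau>))"
        unfolding s2_def using r_pos by (simp add: real_sqrt_mult power2_eq_square)
      finally show ?thesis .
    qed
    have term2: "(\<Sum>t=1..T. cst t) \<le> r * G * s2 * sqrt (real T)"
    proof -
      have "(\<Sum>t=1..T. cst t) \<le> (\<Sum>t=1..T. r * G * s2 * (1 / (2 * sqrt (real t))))"
      proof (rule sum_mono)
        fix t assume t: "t \<in> {1..T}"
        show "cst t \<le> r * G * s2 * (1 / (2 * sqrt (real t)))"
          unfolding cst_def \<eta>_def s2_def
          using cst_bound[OF r_pos G_pos, of t "card (S t)" \<tau>] t delay_card[OF t]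
          unfolding n_def by auto
      qed
      also have "\<dots> = r * G * s2 * (\<Sum>t=1..T. 1 / (2 * sqrt (real t)))"
        by (simp add: sum_distrib_left)
      also have "\<dots> \<le> r * G * s2 * sqrt (real T)"
        using sum_inv_sqrt[of T] r_pos G_pos unfolding s2_def by (intro mult_left_mono) auto
      finally show ?thesis .
    qed
    have "(\<Sum>t=1..T. real_of_ereal (f t (x t)) - real_of_ereal (f t p))
          \<le> (\<Sum>t=1..T. g t \<bullet> x t - g t \<bullet> p)"
      by (rule sum_mono) (rule regret)
    also have "\<dots> = (\<Sum>t=1..T. g t \<bullet> x t) - (\<Sum>s\<in>{1..T}. g s) \<bullet> p"
      by (simp add: sum_subtractf inner_sum_left)
    also have "\<dots> \<le> hr p / es + (\<Sum>t=1..T. cst t)" using main EK by simp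
    also have "\<dots> \<le> r * G * (s2 * sqrt (real T + real \<tau>)) + r * G * s2 * sqrt (real T)"
      using term1 term2 by simp
    also have "\<dots> \<le> 2 * r * G * sqrt ((real T + real \<tau>) * (1 + 2 * real \<tau>))"
    proof -
      have "sqrt (real T) \<le> sqrt (real T + real \<tau>)" by simp
      then have "r * G * s2 * sqrt (real T) \<le> r * G * s2 * sqrt (real T + real \<tau>)"
        using r_pos G_pos unfolding s2_def by (intro mult_left_mono) auto
      moreover have "sqrt ((real T + real \<tau>) * (1 + 2 * real \<tau>)) = sqrt (real T + real \<tau>) * s2"
        unfolding s2_def by (simp add: real_sqrt_mult)
      ultimately show ?thesis by (simp add: algebra_simps)
    qed
    finally show ?thesis .
  qed
qed


end
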